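(* Let $\mathcal{X},\mathcal{Y}_1,\mathcal{Y}_2$ be finite sets and consider the binary hypothesis testing system described in the context, with null pmf $P_{XY_1Y_2}$ and alternative pmf $\bar P_{XY_1Y_2}$, where $\bar P_{XY_1Y_2}(x,y_1,y_2)>0$ for all $(x,y_1,y_2)$. If $R_1\ge H(X)$ and $R_2\ge H(Y_1|X)$ (entropies computed under $P_{XY_1Y_2}$), then for every $\epsilon_1,\epsilon_2\in(0,1)$ the region $\mathcal{E}(R_1,R_2,\epsilon_1,\epsilon_2)$ equals the set of all nonnegative pairs $(\theta_1,\theta_2)$ with \[\theta_1\le D(P_{XY_1}\|\bar P_{XY_1}),\qquad \theta_2\le D(P_{XY_1Y_2}\|\bar P_{XY_1Y_2}).\]
   Context: Setting: Under hypothesis $\mathcal{H}=1$ (null) the triples $(X_t,Y_{1,t},Y_{2,t})$, $t=1,\dots,n$, are i.i.d. $\sim P_{XY_1Y_2}$; under $\mathcal{H}=2$ (alternative) i.i.d. $\sim \bar P_{XY_1Y_2}$. $P_{XY_1}$, $\bar P_{XY_1}$ denote marginals. A code of blocklength $n$: encoder $\phi_{1,n}:\mathcal{X}^n\to\{1,\dots,\|\phi_{1,n}\|\}$, $M_1=\phi_{1,n}(X^n)$ sent to both detectors; Detector 1 (observing $Y_1^n$) computes $M_2=\phi_{2,n}(M_1,Y_1^n)\in\{1,\dots,\|\phi_{2,n}\|\}$, sent to Detector 2, and decides $\hat{\mathcal H}_1=\psi_{1,n}(M_1,Y_1^n)\in\{1,2\}$; Detector 2 (observing $Y_2^n$) decides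 $\hat{\mathcal H}_2=\psi_{2,n}(M_1,M_2,Y_2^n)\in\{1,2\}$. Let $\alpha_{k,n}=\Pr[\hat{\mathcal H}_k\neq 1\mid\mathcal H=1]$, $\beta_{k,n}=\Pr[\hat{\mathcal H}_k\neq 2\mid\mathcal H=2]$. $(\theta_1,\theta_2)$ is achievable for $(R_1,R_2,\epsilon_1,\epsilon_2)$ if there are codes for all $n$ with $\limsup_n\alpha_{k,n}\le\epsilon_k$, $\theta_k\le\liminf_n-\frac1n\log\beta_{k,n}$, $\limsup_n\frac1n\log\|\phi_{k,n}\|\le R_k$, $k=1,2$. $\mathcal{E}(R_1,R_2,\epsilon_1,\epsilon_2)$ is the closure of the set of achievable pairs. *)

theory Defs
  imports "HOL-Analysis.Analysis"
begin

definition is_pmf :: "('a::finite \<Rightarrow> real) \<Rightarrow> bool" where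
  "is_pmf P \<longleftrightarrow> (\<forall>a. 0 \<le> P a) \<and> (\<Sum>a\<in>UNIV. P a) = 1"

definition marg_X :: "('x::finite \<times> 'y1::finite \<times> 'y2::finite \<Rightarrow> real) \<Rightarrow> 'x \<Rightarrow> real" where
  "marg_X P x = (\<Sum>y1\<in>UNIV. \<Sum>y2\<in>UNIV. P (x, y1, y2))"

definition marg_XY1 :: "('x::finite \<times> 'y1::finite \<times> 'y2::finite \<Rightarrow> real) \<Rightarrow> 'x \<times> 'y1 \<Rightarrow> real" where
  "marg_XY1 P = (\<lambda>(x, y1). \<Sum>y2\<in>UNIV. P (x, y1, y2))"

definition entropy_pmf :: "('a::finite \<Rightarrow> real) \<Rightarrow> real" where
  "entropy_pmf p = - (\<Sum>a\<in>UNIV. if p a = 0 then 0 else p a * ln (p a))"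

definition cond_entropy_Y1_X :: "('x::finite \<times> 'y1::finite \<times> 'y2::finite \<Rightarrow> real) \<Rightarrow> real" where
  "cond_entropy_Y1_X P =
     - (\<Sum>x\<in>UNIV. \<Sum>y1\<in>UNIV.
          if marg_XY1 P (x, y1) = 0 then 0
          else marg_XY1 P (x, y1) * ln (marg_XY1 P (x, y1) / marg_X P x))"

text \<open>Relative entropy D(p||q) (used only when q is positive everywhere).\<close>
definition kl_div :: "('a::finite \<Rightarrow> real) \<Rightarrow> ('a \<Rightarrow> real) \<Rightarrow> real" where
  "kl_div p q = (\<Sum>a\<in>UNIV. if p a = 0 then 0 else p a * ln (p a / q a))"

definition seq_prob :: "('a::finite \<Rightarrow> real) \<Rightarrow> nat \<Rightarrow> ('a list \<Rightarrow> bool) \<Rightarrow> real" where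
  "seq_prob P n E = (\<Sum>s\<in>{s. length s = n \<and> E s}. prod_list (map P s))"

definition xs_of :: "('x \<times> 'y1 \<times> 'y2) list \<Rightarrow> 'x list" where
  "xs_of s = map fst s"
definition y1s_of :: "('x \<times> 'y1 \<times> 'y2) list \<Rightarrow> 'y1 list" where
  "y1s_of s = map (fst \<circ> snd) s"
definition y2s_of :: "('x \<times> 'y1 \<times> 'y2) list \<Rightarrow> 'y2 list" where
  "y2s_of s = map (snd \<circ> snd) s"

text \<open>A sequence of codes (one per blocklength n): message-set sizes N1 n, N2 n,
  encoder phi1 n, Detector-1 relay phi2 n, decisions psi1 n, psi2 n in {1,2}.\<close>
definition valid_codes ::
  "(nat \<Rightarrow> nat) \<Rightarrow> (nat \<Rightarrow> nat) \<Rightarrow> (nat \<Rightarrow> 'x list \<Rightarrow> nat) \<Rightarrow> (nat \<Rightarrow> nat \<Rightarrow> 'y1 list \<Rightarrow> nat)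
   \<Rightarrow> (nat \<Rightarrow> nat \<Rightarrow> 'y1 list \<Rightarrow> nat) \<Rightarrow> (nat \<Rightarrow> nat \<Rightarrow> nat \<Rightarrow> 'y2 list \<Rightarrow> nat) \<Rightarrow> bool" where
  "valid_codes N1 N2 phi1 phi2 psi1 psi2 \<longleftrightarrow>
     (\<forall>n. (\<forall>xs. length xs = n \<longrightarrow> phi1 n xs \<in> {1..N1 n})
        \<and> (\<forall>m ys. m \<in> {1..N1 n} \<and> length ys = n \<longrightarrow> phi2 n m ys \<in> {1..N2 n})
        \<and> (\<forall>m ys. m \<in> {1..N1 n} \<and> length ys = n \<longrightarrow> psi1 n m ys \<in> {1, 2})
        \<and> (\<forall>m1 m2 zs. m1 \<in> {1..N1 n} \<and> m2 \<in> {1..N2 n} \<and> length zs = n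
                \<longrightarrow> psi2 n m1 m2 zs \<in> {1, 2}))"

definition dec1 where
  "dec1 phi1 psi1 n s = psi1 n (phi1 n (xs_of s)) (y1s_of s)"
definition dec2 where
  "dec2 phi1 phi2 psi2 n s =
     psi2 n (phi1 n (xs_of s)) (phi2 n (phi1 n (xs_of s)) (y1s_of s)) (y2s_of s)"

definition err_exp :: "nat \<Rightarrow> real \<Rightarrow> ereal" where
  "err_exp n b = (if b = 0 then \<infinity> else ereal (- ln b / real n))"

definition achievable ::
  "('x::finite \<times> 'y1::finite \<times> 'y2::finite \<Rightarrow> real) \<Rightarrow> ('x \<times> 'y1 \<times> 'y2 \<Rightarrow> real)
   \<Rightarrow> real \<Rightarrow> real \<Rightarrow> real \<Rightarrow> real \<Rightarrow> real \<Rightarrow> real \<Rightarrow> bool" where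
  "achievable P Pbar R1 R2 eps1 eps2 th1 th2 \<longleftrightarrow>
     0 \<le> th1 \<and> 0 \<le> th2 \<and>
     (\<exists>N1 N2 phi1 phi2 psi1 psi2.
        valid_codes N1 N2 phi1 phi2 psi1 psi2
      \<and> limsup (\<lambda>n. ereal (seq_prob P n (\<lambda>s. dec1 phi1 psi1 n s \<noteq> 1))) \<le> ereal eps1
      \<and> limsup (\<lambda>n. ereal (seq_prob P n (\<lambda>s. dec2 phi1 phi2 psi2 n s \<noteq> 1))) \<le> ereal eps2
      \<and> ereal th1 \<le> liminf (\<lambda>n. err_exp n (seq_prob Pbar n (\<lambda>s. dec1 phi1 psi1 n s \<noteq> 2)))
      \<and> ereal th2 \<le> liminf (\<lambda>n. err_exp n (seq_prob Pbar n (\<lambda>s. dec2 phi1 phi2 psi2 n s \<noteq> 2)))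
      \<and> limsup (\<lambda>n. ereal (ln (real (N1 n)) / real n)) \<le> ereal R1
      \<and> limsup (\<lambda>n. ereal (ln (real (N2 n)) / real n)) \<le> ereal R2)"

definition exponent_region ::
  "('x::finite \<times> 'y1::finite \<times> 'y2::finite \<Rightarrow> real) \<Rightarrow> ('x \<times> 'y1 \<times> 'y2 \<Rightarrow> real)
   \<Rightarrow> real \<Rightarrow> real \<Rightarrow> real \<Rightarrow> real \<Rightarrow> (real \<times> real) set" where
  "exponent_region P Pbar R1 R2 eps1 eps2 =
     closure {(th1, th2). achievable P Pbar R1 R2 eps1 eps2 th1 th2}"

end

theory Submission
  imports Defs "HOL-Real_Asymp.Real_Asymp"
begin

definition Exl :: "('a::finite \<Rightarrow> real) \<Rightarrow> nat \<Rightarrow> ('a list \<Rightarrow> real) \<Rightarrow> real" where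
  "Exl P n g = (\<Sum>s\<in>{s. length s = n}. prod_list (map P s) * g s)"

lemma finite_len: "finite {s::'a::finite list. length s = n}"
  using finite_lists_length_eq[of "UNIV::'a set" n] by simp

lemma sum_len_Suc:
  "(\<Sum>s\<in>{s::'a::finite list. length s = Suc n}. F s) = (\<Sum>a\<in>UNIV. \<Sum>s\<in>{s. length s = n}. F (a#s))"
proof -
  have e: "{s::'a list. length s = Suc n} = (\<lambda>(a,s). a#s) ` (UNIV \<times> {s. length s = n})"
    by (auto simp: length_Suc_conv image_iff)
  have i: "inj_on (\<lambda>(a,s). a#s) (UNIV \<times> {s::'a list. length s = n})" by (auto simp: inj_on_def)
  show ?thesis unfolding e sum.reindex[OF i] sum.cartesian_product by (simp add: case_prod_beta)
qed

lemma Exl_Suc: "Exl P (Suc n) g = (\<Sum>a\<in>UNIV. P a * Exl P n (\<lambda>s. g (a#s)))"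
  unfolding Exl_def by (simp add: sum_len_Suc sum_distrib_left mult.assoc)

lemma Exl_0: "Exl P 0 g = g []"
  unfolding Exl_def by simp

lemma Exl_add: "Exl P n (\<lambda>s. f s + g s) = Exl P n f + Exl P n g"
  unfolding Exl_def by (simp add: distrib_left sum.distrib)

lemma Exl_cmult: "Exl P n (\<lambda>s. c * f s) = c * Exl P n f"
  unfolding Exl_def by (simp add: sum_distrib_left algebra_simps)

lemma Exl_const: "is_pmf P \<Longrightarrow> Exl P n (\<lambda>_. c) = c"
proof (induction n)
  case 0 then show ?case by (simp add: Exl_0)
next
  case (Suc n) then show ?case by (simp add: Exl_Suc is_pmf_def sum_distrib_right[symmetric])
qed

lemma Exl_mono:
  assumes "\<forall>a. 0 \<le> P a"
    and "\<And>s. length s = n \<Longrightarrow> (\<forall>a\<in>set s. P a \<noteq> 0) \<Longrightarrow> f s \<le> g s"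
  shows "Exl P n f \<le> Exl P n g"
  unfolding Exl_def
proof (rule sum_mono)
  fix s :: "'a list" assume s: "s \<in> {s. length s = n}"
  show "prod_list (map P s) * f s \<le> prod_list (map P s) * g s"
  proof (cases "\<forall>a\<in>set s. P a \<noteq> 0")
    case True
    have "0 \<le> prod_list (map P s)" using assms(1) by (induction s) auto
    then show ?thesis using assms(2)[of s] True s by (simp add: mult_left_mono)
  next
    case False
    then have "prod_list (map P s) = 0" by (auto simp: prod_list_zero_iff)
    then show ?thesis by simp
  qed
qed

lemma seq_prob_Exl: "seq_prob P n E = Exl P n (\<lambda>s. if E s then 1 else 0)"
proof -
  have "seq_prob P n E = (\<Sum>s\<in>{s\<in>{s. length s = n}. E s}. prod_list (map P s))"
    unfolding seq_prob_def by (rule sum.cong) auto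
  also have "\<dots> = Exl P n (\<lambda>s. if E s then 1 else 0)"
    unfolding Exl_def by (simp add: sum.inter_filter[OF finite_len, symmetric] if_distrib cong: if_cong)
  finally show ?thesis .
qed

lemma sum_aff: "(\<Sum>a\<in>A. P a * (h a + (k::real))) = (\<Sum>a\<in>A. P a * h a) + k * (\<Sum>a\<in>A. P a)"
proof -
  have "(\<Sum>a\<in>A. P a * (h a + k)) = (\<Sum>a\<in>A. P a * h a + k * P a)"
    by (rule sum.cong) (auto simp: distrib_left mult.commute)
  then show ?thesis by (simp add: sum.distrib sum_distrib_left)
qed

lemma Exl_sum:
  assumes "is_pmf P"
  shows "Exl P n (\<lambda>s. sum_list (map h s)) = real n * (\<Sum>a\<in>UNIV. P a * h a)"
proof (induction n)
  case 0 then show ?case by (simp add: Exl_0)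
next
  case (Suc n)
  have "Exl P (Suc n) (\<lambda>s. sum_list (map h s)) = (\<Sum>a\<in>UNIV. P a * (h a + real n * (\<Sum>a\<in>UNIV. P a * h a)))"
    by (simp add: Exl_Suc Exl_add Exl_const[OF assms] Suc)
  also have "\<dots> = (\<Sum>a\<in>UNIV. P a * h a) + real n * (\<Sum>a\<in>UNIV. P a * h a) * (\<Sum>a\<in>UNIV. P a)"
    by (simp only: sum_aff mult.assoc)
  also have "\<dots> = real (Suc n) * (\<Sum>a\<in>UNIV. P a * h a)"
    using assms by (simp add: is_pmf_def algebra_simps)
  finally show ?case .
qed

lemma Exl_var:
  assumes "is_pmf P" and c: "(\<Sum>a\<in>UNIV. P a * h a) = 0"
  shows "Exl P n (\<lambda>s. (sum_list (map h s))\<^sup>2) = real n * (\<Sum>a\<in>UNIV. P a * (h a)\<^sup>2)"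
proof (induction n)
  case 0 then show ?case by (simp add: Exl_0)
next
  case (Suc n)
  have eq: "\<And>a s. (sum_list (map h (a#s)))\<^sup>2 = (h a)\<^sup>2 + (2 * h a) * sum_list (map h s) + (sum_list (map h s))\<^sup>2"
    by (simp add: power2_eq_square algebra_simps)
  have "Exl P (Suc n) (\<lambda>s. (sum_list (map h s))\<^sup>2)
     = (\<Sum>a\<in>UNIV. P a * ((h a)\<^sup>2 + real n * (\<Sum>a\<in>UNIV. P a * (h a)\<^sup>2)))"
    by (simp only: Exl_Suc eq Exl_add Exl_cmult Exl_const[OF assms(1)] Suc Exl_sum[OF assms(1)] c) simp
  also have "\<dots> = (\<Sum>a\<in>UNIV. P a * (h a)\<^sup>2) + real n * (\<Sum>a\<in>UNIV. P a * (h a)\<^sup>2) * (\<Sum>a\<in>UNIV. P a)"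
    by (simp only: sum_aff mult.assoc)
  also have "\<dots> = real (Suc n) * (\<Sum>a\<in>UNIV. P a * (h a)\<^sup>2)"
    using assms by (simp add: is_pmf_def algebra_simps)
  finally show ?case .
qed


lemma prod_list_nonneg: "\<forall>a. 0 \<le> (P a::real) \<Longrightarrow> 0 \<le> prod_list (map P (s::'a list))"
  by (induction s) auto

lemma seq_prob_nonneg: "\<forall>a. 0 \<le> P a \<Longrightarrow> 0 \<le> seq_prob P n E"
  unfolding seq_prob_def by (rule sum_nonneg) (simp add: prod_list_nonneg)

lemma seq_prob_mono_pos:
  assumes "\<forall>a. 0 \<le> P a"
    and "\<And>u. length u = n \<Longrightarrow> (\<forall>a\<in>set u. P a \<noteq> 0) \<Longrightarrow> E u \<Longrightarrow> F u"
  shows "seq_prob P n E \<le> seq_prob P n F"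
  unfolding seq_prob_Exl by (rule Exl_mono[OF assms(1)]) (use assms(2) in auto)

lemma seq_prob_cong:
  assumes "\<And>u. length u = n \<Longrightarrow> E u = F u"
  shows "seq_prob P n E = seq_prob P n F"
  unfolding seq_prob_def by (rule sum.cong) (use assms in auto)

lemma seq_prob_union:
  assumes "\<forall>a. 0 \<le> P a"
  shows "seq_prob P n (\<lambda>u. E u \<or> F u) \<le> seq_prob P n E + seq_prob P n F"
proof -
  have "seq_prob P n (\<lambda>u. E u \<or> F u) \<le> Exl P n (\<lambda>u. (if E u then 1 else 0) + (if F u then 1 else 0))"
    unfolding seq_prob_Exl by (rule Exl_mono[OF assms]) auto
  then show ?thesis by (simp add: Exl_add seq_prob_Exl)
qed

lemma seq_prob_compl:
  assumes "is_pmf P"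
  shows "seq_prob P n (\<lambda>u. \<not> E u) = 1 - seq_prob P n E"
proof -
  have "seq_prob P n (\<lambda>u. \<not> E u) + seq_prob P n E = Exl P n (\<lambda>u. (if \<not> E u then 1 else 0) + (if E u then 1 else 0))"
    by (simp add: Exl_add seq_prob_Exl)
  also have "\<dots> = Exl P n (\<lambda>_. 1)" by (rule arg_cong[where f="Exl P n"]) auto
  also have "\<dots> = 1" using Exl_const[OF assms] .
  finally show ?thesis by simp
qed

lemma seq_prob_le1:
  assumes "is_pmf P"
  shows "seq_prob P n E \<le> 1"
  using seq_prob_compl[OF assms, of n E] seq_prob_nonneg[of P n "\<lambda>u. \<not> E u"] assms
  unfolding is_pmf_def by simp

lemma sum_list_shift: "sum_list (map (\<lambda>a. f a - (c::real)) u) = sum_list (map f u) - real (length u) * c"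
  by (induction u) (auto simp: algebra_simps)

lemma wlln:
  assumes P: "is_pmf p" and d: "0 < d"
  shows "seq_prob p n (\<lambda>u. d \<le> \<bar>sum_list (map f u) - real n * (\<Sum>a\<in>UNIV. p a * f a)\<bar>)
         \<le> real n * (\<Sum>a\<in>UNIV. p a * (f a - (\<Sum>b\<in>UNIV. p b * f b))\<^sup>2) / d\<^sup>2"
proof -
  define \<mu> where "\<mu> = (\<Sum>a\<in>UNIV. p a * f a)"
  define h where "h a = f a - \<mu>" for a
  have p1: "(\<Sum>a\<in>UNIV. p a) = 1" and p0: "\<forall>a. 0 \<le> p a" using P by (auto simp: is_pmf_def)
  have c: "(\<Sum>a\<in>UNIV. p a * h a) = 0"
    unfolding h_def using sum_aff[of p "\<lambda>a. f a" "- \<mu>" UNIV] p1 by (simp add: \<mu>_def)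
  have "seq_prob p n (\<lambda>u. d \<le> \<bar>sum_list (map f u) - real n * \<mu>\<bar>)
        \<le> Exl p n (\<lambda>u. (1 / d\<^sup>2) * (sum_list (map h u))\<^sup>2)"
    unfolding seq_prob_Exl
  proof (rule Exl_mono[OF p0])
    fix u :: "'a list" assume len: "length u = n"
    have sh: "sum_list (map h u) = sum_list (map f u) - real n * \<mu>"
      unfolding h_def using sum_list_shift[of f \<mu> u] len by simp
    show "(if d \<le> \<bar>sum_list (map f u) - real n * \<mu>\<bar> then 1 else 0) \<le> 1 / d\<^sup>2 * (sum_list (map h u))\<^sup>2"
    proof (cases "d \<le> \<bar>sum_list (map f u) - real n * \<mu>\<bar>")
      case True
      then have "d\<^sup>2 \<le> (sum_list (map h u))\<^sup>2" unfolding sh using d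
        by (metis abs_le_square_iff abs_of_pos)
      then show ?thesis using True d by (simp add: field_simps)
    qed simp
  qed
  also have "\<dots> = real n * (\<Sum>a\<in>UNIV. p a * (h a)\<^sup>2) / d\<^sup>2"
    by (simp only: Exl_cmult Exl_var[OF P c]) simp
  finally show ?thesis unfolding h_def \<mu>_def .
qed

lemma Exl_map:
  assumes Q: "\<forall>b. Q b = (\<Sum>a\<in>{a. g a = b}. P a)"
  shows "Exl P n (\<lambda>s. F (map g s)) = Exl Q n F"
proof (induction n arbitrary: F)
  case 0 then show ?case by (simp add: Exl_0)
next
  case (Suc n)
  define G where "G b = Exl Q n (\<lambda>u. F (b#u))" for b
  have "Exl P (Suc n) (\<lambda>s. F (map g s)) = (\<Sum>a\<in>UNIV. P a * G (g a))"
    unfolding Exl_Suc G_def by (rule sum.cong[OF refl], subst Suc[symmetric], simp)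
  also have "\<dots> = (\<Sum>b\<in>UNIV. \<Sum>a\<in>{x. x \<in> UNIV \<and> g x = b}. P a * G (g a))"
    by (rule sum.group[symmetric]) auto
  also have "\<dots> = (\<Sum>b\<in>UNIV. Q b * G b)"
    by (rule sum.cong) (auto simp: Q sum_distrib_right)
  also have "\<dots> = Exl Q (Suc n) F" by (simp add: Exl_Suc G_def)
  finally show ?case .
qed

lemma seq_prob_map:
  assumes Q: "\<forall>b. Q b = (\<Sum>a\<in>{a. g a = b}. P a)"
  shows "seq_prob P n (\<lambda>s. E (map g s)) = seq_prob Q n E"
  unfolding seq_prob_Exl using Exl_map[OF Q, of n "\<lambda>u. if E u then 1 else 0"] by simp

lemma prod_list_exp: "(\<forall>a\<in>set u. 0 < (w a::real)) \<Longrightarrow> prod_list (map w u) = exp (sum_list (map (\<lambda>a. ln (w a)) u))"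
proof (induction u)
  case (Cons a u)
  then have "w a = exp (ln (w a))" by auto
  with Cons show ?case by (simp add: exp_add)
qed simp


lemma change_measure:
  assumes "\<forall>a\<in>set u. 0 < (Q a::real)" "\<forall>a. 0 < Qb a"
  shows "prod_list (map Q u) = prod_list (map Qb u) * exp (sum_list (map (\<lambda>a. ln (Q a / Qb a)) u))"
  using assms(1)
proof (induction u)
  case (Cons a u)
  have "exp (ln (Q a / Qb a)) = Q a / Qb a" using Cons.prems assms(2)[rule_format, of a] by simp
  moreover have "Qb a > 0" using assms(2) by auto
  ultimately show ?case using Cons by (simp add: exp_add field_simps)
qed simp

lemma seq_prob_change:
  assumes "\<And>u. length u = n \<Longrightarrow> E u \<Longrightarrow> prod_list (map P2 u) \<le> c * prod_list (map P1 u)"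
  shows "seq_prob P2 n E \<le> c * seq_prob P1 n E"
  unfolding seq_prob_def sum_distrib_left by (rule sum_mono) (use assms in auto)

lemma kl_eq: "kl_div Q Qb = (\<Sum>a\<in>UNIV. Q a * ln (Q a / Qb a))"
  unfolding kl_div_def by (rule sum.cong) auto

lemma lim_var: "(\<lambda>n. real n * V / (real n * d)\<^sup>2) \<longlonglongrightarrow> 0"
proof -
  have "(\<lambda>n. V / d\<^sup>2 * (1 / real n)) \<longlonglongrightarrow> V / d\<^sup>2 * 0"
    by (intro tendsto_intros lim_1_over_n)
  moreover have "\<forall>\<^sub>F n in sequentially. V / d\<^sup>2 * (1 / real n) = real n * V / (real n * d)\<^sup>2"
    using eventually_gt_at_top[of 0] by eventually_elim (simp add: power2_eq_square field_simps)
  ultimately show ?thesis by (simp add: tendsto_cong)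
qed

lemma squeeze0:
  assumes "\<And>n. 0 \<le> (a n::real)" "\<forall>\<^sub>F n in sequentially. a n \<le> b n" "b \<longlonglongrightarrow> 0"
  shows "a \<longlonglongrightarrow> 0"
  by (rule tendsto_sandwich[of "\<lambda>_. 0" a sequentially b]) (use assms in auto)

lemma stein_ach:
  assumes Q: "is_pmf Q" and Qb: "is_pmf Qb" and pos: "\<forall>a. 0 < Qb a" and d: "0 < \<delta>"
  defines "A \<equiv> \<lambda>n u. (\<forall>a\<in>set u. 0 < Q a) \<and> real n * (kl_div Q Qb - \<delta>) \<le> sum_list (map (\<lambda>a. ln (Q a / Qb a)) u)"
  shows "seq_prob Qb n (A n) \<le> exp (- (real n * (kl_div Q Qb - \<delta>)))"
    and "(\<lambda>n. seq_prob Q n (\<lambda>u. \<not> A n u)) \<longlonglongrightarrow> 0"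
proof -
  have Q0: "\<forall>a. 0 \<le> Q a" using Q by (auto simp: is_pmf_def)
  define f where "f a = ln (Q a / Qb a)" for a
  define D where "D = kl_div Q Qb"
  have "seq_prob Qb n (A n) \<le> exp (- (real n * (D - \<delta>))) * seq_prob Q n (A n)"
  proof (rule seq_prob_change)
    fix u :: "'a list" assume "length u = n" "A n u"
    then have pu: "\<forall>a\<in>set u. 0 < Q a" and su: "real n * (D - \<delta>) \<le> sum_list (map f u)"
      unfolding A_def f_def D_def by auto
    have "prod_list (map Q u) = prod_list (map Qb u) * exp (sum_list (map f u))"
      unfolding f_def by (rule change_measure[OF pu pos])
    then have "prod_list (map Qb u) = prod_list (map Q u) * exp (- sum_list (map f u))"
      by (simp add: exp_minus field_simps)
    also have "\<dots> \<le> prod_list (map Q u) * exp (- (real n * (D - \<delta>)))"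
      using su prod_list_nonneg[OF Q0, of u] by (intro mult_left_mono) auto
    finally show "prod_list (map Qb u) \<le> exp (- (real n * (D - \<delta>))) * prod_list (map Q u)"
      by (simp add: mult.commute)
  qed
  also have "\<dots> \<le> exp (- (real n * (D - \<delta>)))"
    using seq_prob_le1[OF Q, of n "A n"] by (simp add: mult_left_le)
  finally show "seq_prob Qb n (A n) \<le> exp (- (real n * (kl_div Q Qb - \<delta>)))" by (simp add: D_def)
  define V where "V = (\<Sum>a\<in>UNIV. Q a * (f a - (\<Sum>b\<in>UNIV. Q b * f b))\<^sup>2)"
  have Df: "D = (\<Sum>a\<in>UNIV. Q a * f a)" unfolding D_def f_def by (rule kl_eq)
  show "(\<lambda>n. seq_prob Q n (\<lambda>u. \<not> A n u)) \<longlonglongrightarrow> 0"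
  proof (rule squeeze0)
    show "0 \<le> seq_prob Q n (\<lambda>u. \<not> A n u)" for n using seq_prob_nonneg[OF Q0] .
    show "(\<lambda>n. real n * V / (real n * \<delta>)\<^sup>2) \<longlonglongrightarrow> 0" by (rule lim_var)
    show "\<forall>\<^sub>F n in sequentially. seq_prob Q n (\<lambda>u. \<not> A n u) \<le> real n * V / (real n * \<delta>)\<^sup>2"
      using eventually_gt_at_top[of 0]
    proof eventually_elim
      case (elim n)
      have "seq_prob Q n (\<lambda>u. \<not> A n u) \<le> seq_prob Q n (\<lambda>u. real n * \<delta> \<le> \<bar>sum_list (map f u) - real n * (\<Sum>a\<in>UNIV. Q a * f a)\<bar>)"
      proof (rule seq_prob_mono_pos[OF Q0])
        fix u :: "'a list" assume "length u = n" "\<forall>a\<in>set u. Q a \<noteq> 0" "\<not> A n u"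
        then have "sum_list (map f u) < real n * (D - \<delta>)"
          using Q0 unfolding A_def f_def D_def by (force simp: less_le)
        then show "real n * \<delta> \<le> \<bar>sum_list (map f u) - real n * (\<Sum>a\<in>UNIV. Q a * f a)\<bar>"
          unfolding Df[symmetric] by (simp add: algebra_simps)
      qed
      also have "\<dots> \<le> real n * V / (real n * \<delta>)\<^sup>2"
        unfolding V_def by (rule wlln[OF Q]) (use elim d in simp)
      finally show ?case .
    qed
  qed
qed

lemma err_exp_lower:
  assumes "0 \<le> b" "b \<le> 1" "b \<le> exp (- (real n * a))" "0 < n"
  shows "ereal (max 0 a) \<le> err_exp n b"
proof (cases "b = 0")
  case False
  then have bp: "0 < b" using assms by simp
  have "ln b \<le> - (real n * a)" using assms(3) bp by (metis ln_exp ln_le_cancel_iff exp_gt_zero)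
  moreover have "ln b \<le> 0" using assms(2) bp by simp
  ultimately have "real n * max 0 a \<le> - ln b" by (auto simp: max_def)
  then have "max 0 a \<le> - ln b / real n" using assms(4) by (subst pos_le_divide_eq) (auto simp: mult.commute)
  then show ?thesis using False by (simp add: err_exp_def)
qed (simp add: err_exp_def)


lemma stein_conv:
  assumes Q: "is_pmf Q" and Qb: "is_pmf Qb" and pos: "\<forall>a. 0 < Qb a" and c: "0 < c"
    and ev: "\<forall>\<^sub>F n in sequentially. c \<le> seq_prob Q n (E n)"
  shows "liminf (\<lambda>n. err_exp n (seq_prob Qb n (E n))) \<le> ereal (kl_div Q Qb)"
proof (rule ereal_le_epsilon2)
  fix \<delta> :: real assume d: "0 < \<delta>"
  have Q0: "\<forall>a. 0 \<le> Q a" using Q by (auto simp: is_pmf_def)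
  have Qb0: "\<forall>a. 0 \<le> Qb a" using pos by (auto intro: less_imp_le)
  define f where "f a = ln (Q a / Qb a)" for a
  define D where "D = kl_div Q Qb"
  define V where "V = (\<Sum>a\<in>UNIV. Q a * (f a - (\<Sum>b\<in>UNIV. Q b * f b))\<^sup>2)"
  have Df: "D = (\<Sum>a\<in>UNIV. Q a * f a)" unfolding D_def f_def by (rule kl_eq)
  define B where "B n u = (sum_list (map f u) \<le> real n * (D + \<delta>))" for n u
  have lim: "(\<lambda>n. real n * V / (real n * \<delta>)\<^sup>2) \<longlonglongrightarrow> 0" by (rule lim_var)
  then have ev2: "\<forall>\<^sub>F n in sequentially. real n * V / (real n * \<delta>)\<^sup>2 < c / 2"
    using c by (intro order_tendstoD) auto
  have lim2: "(\<lambda>n. ereal (D + \<delta> - ln (c / 2) / real n)) \<longlonglongrightarrow> ereal (D + \<delta> - 0)"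
    unfolding lim_ereal by (intro tendsto_intros tendsto_divide_0[OF tendsto_const] filterlim_real_sequentially)
  have "\<forall>\<^sub>F n in sequentially. err_exp n (seq_prob Qb n (E n)) \<le> ereal (D + \<delta> - ln (c / 2) / real n)"
    using ev ev2 eventually_gt_at_top[of 0]
  proof eventually_elim
    case (elim n)
    have nb: "seq_prob Q n (\<lambda>u. \<not> B n u) \<le> real n * V / (real n * \<delta>)\<^sup>2"
    proof -
      have "seq_prob Q n (\<lambda>u. \<not> B n u) \<le> seq_prob Q n (\<lambda>u. real n * \<delta> \<le> \<bar>sum_list (map f u) - real n * (\<Sum>a\<in>UNIV. Q a * f a)\<bar>)"
      proof (rule seq_prob_mono_pos[OF Q0])
        fix u :: "'a list" assume "\<not> B n u"
        then show "real n * \<delta> \<le> \<bar>sum_list (map f u) - real n * (\<Sum>a\<in>UNIV. Q a * f a)\<bar>"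
          unfolding Df[symmetric] B_def by (simp add: algebra_simps)
      qed
      also have "\<dots> \<le> real n * V / (real n * \<delta>)\<^sup>2"
        unfolding V_def by (rule wlln[OF Q]) (use elim d in simp)
      finally show ?thesis .
    qed
    have "seq_prob Q n (E n) \<le> seq_prob Q n (\<lambda>u. (E n u \<and> B n u) \<or> \<not> B n u)"
      by (rule seq_prob_mono_pos[OF Q0]) auto
    also have "\<dots> \<le> seq_prob Q n (\<lambda>u. E n u \<and> B n u) + seq_prob Q n (\<lambda>u. \<not> B n u)"
      by (rule seq_prob_union[OF Q0])
    finally have eb: "c / 2 \<le> seq_prob Q n (\<lambda>u. E n u \<and> B n u)" using elim nb by linarith
    have "seq_prob Q n (\<lambda>u. E n u \<and> B n u) \<le> exp (real n * (D + \<delta>)) * seq_prob Qb n (\<lambda>u. E n u \<and> B n u)"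
    proof (rule seq_prob_change)
      fix u :: "'a list" assume "E n u \<and> B n u"
      then have su: "sum_list (map f u) \<le> real n * (D + \<delta>)" by (simp add: B_def)
      show "prod_list (map Q u) \<le> exp (real n * (D + \<delta>)) * prod_list (map Qb u)"
      proof (cases "\<forall>a\<in>set u. 0 < Q a")
        case True
        have "prod_list (map Q u) = prod_list (map Qb u) * exp (sum_list (map f u))"
          unfolding f_def by (rule change_measure[OF True pos])
        also have "\<dots> \<le> prod_list (map Qb u) * exp (real n * (D + \<delta>))"
          using su prod_list_nonneg[OF Qb0, of u] by (intro mult_left_mono) auto
        finally show ?thesis by (simp add: mult.commute)
      next
        case False
        then obtain a where "a \<in> set u" "Q a = 0" using Q0 by (force simp: less_le)
        then have "prod_list (map Q u) = 0" by (auto simp: prod_list_zero_iff)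
        then show ?thesis using prod_list_nonneg[OF Qb0, of u] by simp
      qed
    qed
    also have "\<dots> \<le> exp (real n * (D + \<delta>)) * seq_prob Qb n (E n)"
      by (intro mult_left_mono seq_prob_mono_pos[OF Qb0]) auto
    finally have "c / 2 \<le> exp (real n * (D + \<delta>)) * seq_prob Qb n (E n)" using eb by linarith
    then have "c / 2 * exp (- (real n * (D + \<delta>))) \<le> exp (real n * (D + \<delta>)) * seq_prob Qb n (E n) * exp (- (real n * (D + \<delta>)))"
      by (rule mult_right_mono) auto
    also have "\<dots> = seq_prob Qb n (E n)" by (simp add: exp_minus)
    finally have lb: "c / 2 * exp (- (real n * (D + \<delta>))) \<le> seq_prob Qb n (E n)" .
    have cp: "0 < c / 2 * exp (- (real n * (D + \<delta>)))" using c by simp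
    then have bp: "0 < seq_prob Qb n (E n)" using lb by linarith
    have "ln (c / 2 * exp (- (real n * (D + \<delta>)))) \<le> ln (seq_prob Qb n (E n))"
      using lb cp by simp
    moreover have "ln (c / 2 * exp (- (real n * (D + \<delta>)))) = ln (c / 2) - real n * (D + \<delta>)"
      using c by (subst ln_mult) auto
    ultimately have "ln (c / 2) - real n * (D + \<delta>) \<le> ln (seq_prob Qb n (E n))" by simp
    then have "- ln (seq_prob Qb n (E n)) / real n \<le> (real n * (D + \<delta>) - ln (c / 2)) / real n"
      using elim by (intro divide_right_mono) auto
    also have "\<dots> = D + \<delta> - ln (c / 2) / real n" using elim by (simp add: field_simps)
    finally show ?case using bp by (simp add: err_exp_def)
  qed
  then have "liminf (\<lambda>n. err_exp n (seq_prob Qb n (E n))) \<le> liminf (\<lambda>n. ereal (D + \<delta> - ln (c / 2) / real n))"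
    by (rule Liminf_mono)
  also have "\<dots> = ereal (D + \<delta>)" using lim_imp_Liminf[OF _ lim2] by simp
  finally show "liminf (\<lambda>n. err_exp n (seq_prob Qb n (E n))) \<le> ereal (kl_div Q Qb) + ereal \<delta>"
    by (simp add: D_def)
qed


lemma lim_pow: "(\<lambda>n. real n * V / (real n powr (3/4))\<^sup>2) \<longlonglongrightarrow> 0"
proof -
  have "(\<lambda>n. V * (real n / (real n powr (3/4))\<^sup>2)) \<longlonglongrightarrow> V * 0"
    by (intro tendsto_intros) real_asymp
  then show ?thesis by (simp add: mult.commute)
qed

lemma sum_list_neg: "sum_list (map (\<lambda>a. - f a) u) = - sum_list (map f u :: real list)"
  by (induction u) auto

lemma typ_prob:
  assumes p: "is_pmf p" and wpos: "\<forall>b. 0 < p b \<longrightarrow> 0 < w b"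
  shows "(\<lambda>n. seq_prob p n (\<lambda>u. prod_list (map w u) < exp (- (real n * (\<Sum>b\<in>UNIV. p b * - ln (w b)) + real n powr (3/4))))) \<longlonglongrightarrow> 0"
proof -
  have p0: "\<forall>a. 0 \<le> p a" using p by (auto simp: is_pmf_def)
  define h where "h b = - ln (w b)" for b
  define \<mu> where "\<mu> = (\<Sum>b\<in>UNIV. p b * h b)"
  define V where "V = (\<Sum>a\<in>UNIV. p a * (h a - (\<Sum>b\<in>UNIV. p b * h b))\<^sup>2)"
  show ?thesis unfolding h_def[symmetric] \<mu>_def[symmetric]
  proof (rule squeeze0)
    show "0 \<le> seq_prob p n (\<lambda>u. prod_list (map w u) < exp (- (real n * \<mu> + real n powr (3/4))))" for n
      using seq_prob_nonneg[OF p0] .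
    show "(\<lambda>n. real n * V / (real n powr (3/4))\<^sup>2) \<longlonglongrightarrow> 0" by (rule lim_pow)
    show "\<forall>\<^sub>F n in sequentially. seq_prob p n (\<lambda>u. prod_list (map w u) < exp (- (real n * \<mu> + real n powr (3/4))))
          \<le> real n * V / (real n powr (3/4))\<^sup>2"
      using eventually_gt_at_top[of 0]
    proof eventually_elim
      case (elim n)
      have "seq_prob p n (\<lambda>u. prod_list (map w u) < exp (- (real n * \<mu> + real n powr (3/4))))
          \<le> seq_prob p n (\<lambda>u. real n powr (3/4) \<le> \<bar>sum_list (map h u) - real n * (\<Sum>b\<in>UNIV. p b * h b)\<bar>)"
      proof (rule seq_prob_mono_pos[OF p0])
        fix u :: "'a list" assume "\<forall>a\<in>set u. p a \<noteq> 0" and lt: "prod_list (map w u) < exp (- (real n * \<mu> + real n powr (3/4)))"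
        then have "\<forall>a\<in>set u. 0 < w a" using wpos p0 by (auto simp: less_le)
        then have "prod_list (map w u) = exp (- sum_list (map h u))"
          unfolding h_def by (simp add: prod_list_exp sum_list_neg)
        with lt have "- sum_list (map h u) < - (real n * \<mu> + real n powr (3/4))" by simp
        then show "real n powr (3/4) \<le> \<bar>sum_list (map h u) - real n * (\<Sum>b\<in>UNIV. p b * h b)\<bar>"
          unfolding \<mu>_def by simp
      qed
      also have "\<dots> \<le> real n * V / (real n powr (3/4))\<^sup>2"
        unfolding V_def by (rule wlln[OF p]) (use elim in simp)
      finally show ?case .
    qed
  qed
qed

lemma card_typ:
  assumes "finite U" "\<forall>x\<in>U. 0 \<le> w x" "(\<Sum>x\<in>U. w x) \<le> 1" "0 < (c::real)"
  shows "real (card {x\<in>U. c \<le> w x}) \<le> 1 / c"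
proof -
  have "real (card {x\<in>U. c \<le> w x}) * c = (\<Sum>x\<in>{x\<in>U. c \<le> w x}. c)" by simp
  also have "\<dots> \<le> (\<Sum>x\<in>{x\<in>U. c \<le> w x}. w x)" by (rule sum_mono) auto
  also have "\<dots> \<le> (\<Sum>x\<in>U. w x)" by (rule sum_mono2) (use assms in auto)
  finally show ?thesis using assms by (simp add: field_simps)
qed

lemma card_le_floor: "real k \<le> exp r \<Longrightarrow> k \<le> nat \<lfloor>exp r\<rfloor>"
  by (metis le_nat_floor of_nat_le_iff floor_of_nat nat_int floor_mono)

lemma rate_ln: "0 \<le> r \<Longrightarrow> ln (real (nat \<lfloor>exp r\<rfloor> + 1)) \<le> r + ln 2"
proof -
  assume r: "0 \<le> r"
  have "real_of_int \<lfloor>exp r\<rfloor> \<le> exp r" by (rule of_int_floor_le)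
  moreover have "1 \<le> exp r" using r by simp
  moreover have "real (nat \<lfloor>exp r\<rfloor> + 1) = real_of_int \<lfloor>exp r\<rfloor> + 1" by simp
  ultimately have "real (nat \<lfloor>exp r\<rfloor> + 1) \<le> 2 * exp r" by linarith
  moreover have "0 < real (nat \<lfloor>exp r\<rfloor> + 1)" by (simp only: of_nat_0_less_iff)
  ultimately have "ln (real (nat \<lfloor>exp r\<rfloor> + 1)) \<le> ln (2 * exp r)" using ln_le_cancel_iff by simp
  also have "\<dots> = r + ln 2" by (simp add: ln_mult)
  finally show ?thesis .
qed

lemma rate_limsup:
  assumes "0 \<le> \<mu>" "\<mu> \<le> R"
  shows "limsup (\<lambda>n. ereal (ln (real (nat \<lfloor>exp (real n * \<mu> + real n powr (3/4))\<rfloor> + 1)) / real n)) \<le> ereal R"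
proof -
  have lim: "(\<lambda>n. ereal (\<mu> + real n powr (3/4) / real n + ln 2 / real n)) \<longlonglongrightarrow> ereal (\<mu> + 0 + 0)"
    unfolding lim_ereal
    by (intro tendsto_intros tendsto_divide_0[OF tendsto_const] filterlim_real_sequentially) real_asymp
  have "\<forall>\<^sub>F n in sequentially. ereal (ln (real (nat \<lfloor>exp (real n * \<mu> + real n powr (3/4))\<rfloor> + 1)) / real n)
        \<le> ereal (\<mu> + real n powr (3/4) / real n + ln 2 / real n)"
    using eventually_gt_at_top[of 0]
  proof eventually_elim
    case (elim n)
    have "ln (real (nat \<lfloor>exp (real n * \<mu> + real n powr (3/4))\<rfloor> + 1)) \<le> real n * \<mu> + real n powr (3/4) + ln 2"
      using assms by (intro rate_ln) simp
    then have "ln (real (nat \<lfloor>exp (real n * \<mu> + real n powr (3/4))\<rfloor> + 1)) / real n \<le> (real n * \<mu> + real n powr (3/4) + ln 2) / real n"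
      using elim by (intro divide_right_mono) auto
    also have "\<dots> = \<mu> + real n powr (3/4) / real n + ln 2 / real n" using elim by (simp add: field_simps)
    finally show ?case by simp
  qed
  then have "limsup (\<lambda>n. ereal (ln (real (nat \<lfloor>exp (real n * \<mu> + real n powr (3/4))\<rfloor> + 1)) / real n))
     \<le> limsup (\<lambda>n. ereal (\<mu> + real n powr (3/4) / real n + ln 2 / real n))" by (rule Limsup_mono)
  also have "\<dots> = ereal \<mu>" using lim_imp_Limsup[OF _ lim] by simp
  finally have "limsup (\<lambda>n. ereal (ln (real (nat \<lfloor>exp (real n * \<mu> + real n powr (3/4))\<rfloor> + 1)) / real n)) \<le> ereal \<mu>" .
  then show ?thesis using assms(2) by (meson order_trans ereal_less_eq(3))
qed

lemma code_exists:
  assumes "finite S"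
  shows "\<exists>e d. \<forall>x\<in>S. e x \<in> {1..card S} \<and> d (e x) = x"
proof -
  obtain h where h: "bij_betw h {0..<card S} S" using ex_bij_betw_nat_finite[OF assms] by blast
  define e where "e x = inv_into {0..<card S} h x + 1" for x
  have "\<forall>x\<in>S. e x \<in> {1..card S} \<and> h (e x - 1) = x"
  proof
    fix x assume x: "x \<in> S"
    have "inv_into {0..<card S} h x \<in> {0..<card S}" using x h by (metis bij_betw_def inv_into_into)
    moreover have "h (inv_into {0..<card S} h x) = x" using x h by (metis bij_betw_def f_inv_into_f)
    ultimately show "e x \<in> {1..card S} \<and> h (e x - 1) = x" by (auto simp: e_def)
  qed
  then show ?thesis by (intro exI[of _ e] exI[of _ "\<lambda>m. h (m - 1)"]) auto
qed


definition g12 :: "'x \<times> 'y1 \<times> 'y2 \<Rightarrow> 'x \<times> 'y1" where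
  "g12 t = (fst t, fst (snd t))"

lemma sum_pair_UNIV: "(\<Sum>b\<in>(UNIV::('a::finite \<times> 'b::finite) set). F b) = (\<Sum>x\<in>UNIV. \<Sum>y\<in>UNIV. F (x, y))"
  by (simp add: sum.cartesian_product UNIV_Times_UNIV[symmetric] del: UNIV_Times_UNIV)

lemma marg12_fiber:
  "marg_XY1 P b = (\<Sum>a\<in>{a. g12 a = b}. P a)"
proof (cases b)
  case (Pair x y)
  have e: "{a. g12 a = (x, y)} = (\<lambda>z. (x, y, z)) ` UNIV" by (auto simp: g12_def image_iff)
  have i: "inj (\<lambda>z::'c. (x, y, z))" by (auto simp: inj_on_def)
  show ?thesis unfolding Pair e by (simp add: sum.reindex[OF i] marg_XY1_def)
qed

lemma margX_fiber:
  "marg_X P x = (\<Sum>a\<in>{a. fst a = x}. P a)"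
proof -
  have e: "{a. fst a = x} = (\<lambda>p. (x, p)) ` UNIV" by (auto simp: image_iff)
  have i: "inj (\<lambda>p::'b \<times> 'c. (x, p))" by (auto simp: inj_on_def)
  show ?thesis unfolding e by (simp add: sum.reindex[OF i] marg_X_def sum_pair_UNIV)
qed

lemma margX_Q: "marg_X P x = (\<Sum>y\<in>UNIV. marg_XY1 P (x, y))"
  by (simp add: marg_X_def marg_XY1_def)

lemma pmf_push:
  assumes P: "is_pmf P" and Q: "\<forall>b. Q b = (\<Sum>a\<in>{a. g a = b}. P a)"
  shows "is_pmf Q"
proof -
  have "(\<Sum>b\<in>UNIV. Q b) = (\<Sum>b\<in>UNIV. \<Sum>a\<in>{x. x \<in> UNIV \<and> g x = b}. P a)" using Q by simp
  also have "\<dots> = (\<Sum>a\<in>UNIV. P a)" by (rule sum.group) auto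
  finally show ?thesis using P Q unfolding is_pmf_def by (auto intro: sum_nonneg)
qed

lemma sum_zip:
  assumes "\<forall>a. 0 \<le> (W a::real)" "\<forall>a. (\<Sum>y\<in>UNIV. W (a, y)) \<le> 1"
  shows "length (x::'a list) = n \<Longrightarrow> (\<Sum>y\<in>{y::'b::finite list. length y = n}. prod_list (map W (zip x y))) \<le> 1"
proof (induction x arbitrary: n)
  case Nil then show ?case by simp
next
  case (Cons a x)
  then obtain m where n: "n = Suc m" and lx: "length x = m" by auto
  have "(\<Sum>y\<in>{y::'b list. length y = n}. prod_list (map W (zip (a#x) y)))
      = (\<Sum>c\<in>UNIV. W (a, c) * (\<Sum>y\<in>{y::'b list. length y = m}. prod_list (map W (zip x y))))"
    unfolding n sum_len_Suc by (simp add: sum_distrib_left)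
  also have "\<dots> \<le> (\<Sum>c\<in>UNIV. W (a, c) * 1)"
    by (rule sum_mono, rule mult_left_mono) (use Cons.IH[OF lx] assms in auto)
  also have "\<dots> \<le> 1" using assms by simp
  finally show ?case .
qed

lemma entropy_eq: "entropy_pmf p = (\<Sum>x\<in>UNIV. p x * - ln (p x))"
  unfolding entropy_pmf_def by (simp add: sum_negf[symmetric]) (rule sum.cong, auto)

lemma entropy_nonneg:
  assumes "is_pmf p" shows "0 \<le> entropy_pmf p"
proof -
  have "p x * - ln (p x) \<ge> 0" for x
  proof -
    have "0 \<le> p x" using assms by (auto simp: is_pmf_def)
    moreover have "p x \<le> 1"
      using assms member_le_sum[of x UNIV p] by (auto simp: is_pmf_def)
    ultimately show ?thesis by (cases "p x = 0") (auto intro!: mult_nonneg_nonpos)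
  qed
  then show ?thesis unfolding entropy_eq by (intro sum_nonneg) auto
qed


lemma Q_le_PX:
  assumes "is_pmf P" shows "marg_XY1 P (x, y) \<le> marg_X P x"
proof -
  have "\<forall>b. 0 \<le> marg_XY1 P b" using assms unfolding marg_XY1_def is_pmf_def by (auto intro: sum_nonneg)
  then show ?thesis unfolding margX_Q by (intro member_le_sum) auto
qed

lemma cond_eq: "cond_entropy_Y1_X P = (\<Sum>b\<in>UNIV. marg_XY1 P b * - ln (marg_XY1 P b / marg_X P (fst b)))"
  unfolding cond_entropy_Y1_X_def sum_pair_UNIV
  by (simp add: sum_negf[symmetric]) (intro sum.cong refl, auto)

lemma cond_nonneg:
  assumes "is_pmf P" shows "0 \<le> cond_entropy_Y1_X P"
  unfolding cond_eq
proof (intro sum_nonneg)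
  fix b :: "'a \<times> 'b"
  obtain x y where b: "b = (x, y)" by (cases b)
  have q0: "0 \<le> marg_XY1 P b" using assms unfolding marg_XY1_def is_pmf_def by (auto intro: sum_nonneg split: prod.split)
  show "0 \<le> marg_XY1 P b * - ln (marg_XY1 P b / marg_X P (fst b))"
  proof (cases "marg_XY1 P b = 0")
    case False
    then have qp: "0 < marg_XY1 P b" using q0 by simp
    have le: "marg_XY1 P b \<le> marg_X P (fst b)" using Q_le_PX[OF assms] b by simp
    then have "marg_XY1 P b / marg_X P (fst b) \<le> 1" using qp by simp
    moreover have "0 < marg_XY1 P b / marg_X P (fst b)" using qp le by simp
    ultimately have "ln (marg_XY1 P b / marg_X P (fst b)) \<le> 0" by simp
    then show ?thesis using qp by (simp add: mult_nonneg_nonpos)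
  qed simp
qed

lemma zip_g12: "zip (xs_of s) (y1s_of s) = map g12 s"
  by (induction s) (auto simp: xs_of_def y1s_of_def g12_def)

lemma zip3: "zip (xs_of s) (zip (y1s_of s) (y2s_of s)) = s"
  by (induction s) (auto simp: xs_of_def y1s_of_def y2s_of_def)

lemma limsup_le0:
  assumes "\<forall>\<^sub>F n in sequentially. a n \<le> b n" "b \<longlonglongrightarrow> 0" "0 \<le> e"
  shows "limsup (\<lambda>n. ereal (a n)) \<le> ereal e"
proof -
  have "limsup (\<lambda>n. ereal (a n)) \<le> limsup (\<lambda>n. ereal (b n))"
    by (rule Limsup_mono) (use assms(1) in auto)
  also have "\<dots> = ereal 0" by (rule lim_imp_Limsup) (use assms(2) in \<open>auto simp: lim_ereal\<close>)
  finally show ?thesis using assms(3) by (meson order_trans ereal_less_eq(3))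
qed

lemma liminf_ge:
  assumes "\<forall>\<^sub>F n in sequentially. ereal c \<le> a n"
  shows "ereal c \<le> liminf a"
proof -
  have "liminf (\<lambda>n. ereal c) \<le> liminf a" by (rule Liminf_mono) (use assms in auto)
  then show ?thesis by (simp add: Liminf_const)
qed


lemma achievability:
  fixes P Pbar :: "'x::finite \<times> 'y1::finite \<times> 'y2::finite \<Rightarrow> real"
  assumes P: "is_pmf P" and Pb: "is_pmf Pbar" and pos: "\<forall>a. 0 < Pbar a"
    and R1: "R1 \<ge> entropy_pmf (marg_X P)" and R2: "R2 \<ge> cond_entropy_Y1_X P"
    and e1: "0 < eps1" and e2: "0 < eps2" and d: "0 < \<delta>"
    and th1: "0 \<le> th1" "th1 \<le> max 0 (kl_div (marg_XY1 P) (marg_XY1 Pbar) - \<delta>)"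
    and th2: "0 \<le> th2" "th2 \<le> max 0 (kl_div P Pbar - \<delta>)"
  shows "achievable P Pbar R1 R2 eps1 eps2 th1 th2"
proof -
  define PX where "PX = marg_X P"
  define Q where "Q = marg_XY1 P"
  define Qb where "Qb = marg_XY1 Pbar"
  define W where "W b = Q b / PX (fst b)" for b
  define \<mu>1 where "\<mu>1 = (\<Sum>x\<in>UNIV. PX x * - ln (PX x))"
  define \<mu>2 where "\<mu>2 = (\<Sum>b\<in>UNIV. Q b * - ln (W b))"
  define r1 where "r1 n = real n * \<mu>1 + real n powr (3/4)" for n :: nat
  define r2 where "r2 n = real n * \<mu>2 + real n powr (3/4)" for n :: nat
  define S where "S n = {x::'x list. length x = n \<and> exp (- r1 n) \<le> prod_list (map PX x)}" for n
  define T where "T n x = {y::'y1 list. length y = n \<and> exp (- r2 n) \<le> prod_list (map W (zip x y))}" for n x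
  define K1 where "K1 n = nat \<lfloor>exp (r1 n)\<rfloor>" for n
  define K2 where "K2 n = nat \<lfloor>exp (r2 n)\<rfloor>" for n
  define A1 where "A1 = (\<lambda>n u. (\<forall>a\<in>set u. 0 < Q a) \<and> real n * (kl_div Q Qb - \<delta>) \<le> sum_list (map (\<lambda>a. ln (Q a / Qb a)) u))"
  define A2 where "A2 = (\<lambda>n u. (\<forall>a\<in>set u. 0 < P a) \<and> real n * (kl_div P Pbar - \<delta>) \<le> sum_list (map (\<lambda>a. ln (P a / Pbar a)) u))"

  have PXf: "\<forall>b. PX b = (\<Sum>a\<in>{a. fst a = b}. P a)" unfolding PX_def using margX_fiber by blast
  have Qf: "\<forall>b. Q b = (\<Sum>a\<in>{a. g12 a = b}. P a)" unfolding Q_def using marg12_fiber by blast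
  have Qbf: "\<forall>b. Qb b = (\<Sum>a\<in>{a. g12 a = b}. Pbar a)" unfolding Qb_def using marg12_fiber by blast
  have pmfPX: "is_pmf PX" by (rule pmf_push[OF P PXf])
  have pmfQ: "is_pmf Q" by (rule pmf_push[OF P Qf])
  have pmfQb: "is_pmf Qb" by (rule pmf_push[OF Pb Qbf])
  have posQb: "\<forall>b. 0 < Qb b"
  proof
    fix b :: "'x \<times> 'y1"
    show "0 < Qb b" unfolding Qb_def marg_XY1_def using pos by (cases b) (auto intro!: sum_pos)
  qed
  have P0: "\<forall>a. 0 \<le> P a" and Pb0: "\<forall>a. 0 \<le> Pbar a" using P Pb by (auto simp: is_pmf_def)
  have PX0: "\<forall>a. 0 \<le> PX a" and Q0: "\<forall>a. 0 \<le> Q a" and Qb0: "\<forall>a. 0 \<le> Qb a"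
    using pmfPX pmfQ pmfQb by (auto simp: is_pmf_def)
  have QPX: "Q b \<le> PX (fst b)" for b unfolding Q_def PX_def using Q_le_PX[OF P, of "fst b" "snd b"] by simp
  have W0: "\<forall>a. 0 \<le> W a" unfolding W_def using Q0 PX0 by simp
  have Wpos: "\<forall>b. 0 < Q b \<longrightarrow> 0 < W b" unfolding W_def using QPX by (metis divide_pos_pos order_less_le_trans)
  have W1: "\<forall>a. (\<Sum>y\<in>UNIV. W (a, y)) \<le> 1"
  proof
    fix a
    have "(\<Sum>y\<in>UNIV. W (a, y)) = (\<Sum>y\<in>UNIV. Q (a, y)) / PX a" unfolding W_def by (simp add: sum_divide_distrib)
    also have "\<dots> = PX a / PX a" unfolding PX_def Q_def by (simp add: margX_Q)
    also have "\<dots> \<le> 1" by (cases "PX a = 0") auto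
    finally show "(\<Sum>y\<in>UNIV. W (a, y)) \<le> 1" .
  qed
  have mu1: "\<mu>1 = entropy_pmf (marg_X P)" unfolding \<mu>1_def PX_def by (simp add: entropy_eq)
  have mu2: "\<mu>2 = cond_entropy_Y1_X P" unfolding \<mu>2_def W_def Q_def PX_def by (simp add: cond_eq)
  have mu1p: "0 \<le> \<mu>1" unfolding mu1 by (rule entropy_nonneg[OF pmfPX[unfolded PX_def]])
  have mu2p: "0 \<le> \<mu>2" unfolding mu2 by (rule cond_nonneg[OF P])
  have finL: "finite {x::'a::finite list. length x = n}" for n by (rule finite_len)
  have finS: "finite (S n)" for n by (rule finite_subset[OF _ finite_len[of n]]) (auto simp: S_def)
  have finT: "finite (T n x)" for n x by (rule finite_subset[OF _ finite_len[of n]]) (auto simp: T_def)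
  have cardS: "card (S n) \<le> K1 n" for n
  proof -
    have "(\<Sum>x\<in>{x::'x list. length x = n}. prod_list (map PX x)) = Exl PX n (\<lambda>_. 1)" by (simp add: Exl_def)
    also have "\<dots> = 1" by (rule Exl_const[OF pmfPX])
    finally have s1: "(\<Sum>x\<in>{x::'x list. length x = n}. prod_list (map PX x)) \<le> 1" by simp
    have "real (card {x\<in>{x::'x list. length x = n}. exp (- r1 n) \<le> prod_list (map PX x)}) \<le> 1 / exp (- r1 n)"
      by (rule card_typ[OF finite_len _ s1]) (auto intro: prod_list_nonneg[OF PX0])
    moreover have "{x\<in>{x::'x list. length x = n}. exp (- r1 n) \<le> prod_list (map PX x)} = S n" by (auto simp: S_def)
    ultimately have "real (card (S n)) \<le> exp (r1 n)" by (simp add: exp_minus divide_inverse)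
    then show ?thesis unfolding K1_def by (rule card_le_floor)
  qed
  have cardT: "card (T n x) \<le> K2 n" if lx: "length x = n" for n x
  proof -
    have s1: "(\<Sum>y\<in>{y::'y1 list. length y = n}. prod_list (map W (zip x y))) \<le> 1"
      by (rule sum_zip[OF W0 W1 lx])
    have "real (card {y\<in>{y::'y1 list. length y = n}. exp (- r2 n) \<le> prod_list (map W (zip x y))}) \<le> 1 / exp (- r2 n)"
      by (rule card_typ[OF finite_len _ s1]) (auto intro: prod_list_nonneg[OF W0])
    moreover have "{y\<in>{y::'y1 list. length y = n}. exp (- r2 n) \<le> prod_list (map W (zip x y))} = T n x" by (auto simp: T_def)
    ultimately have "real (card (T n x)) \<le> exp (r2 n)" by (simp add: exp_minus divide_inverse)
    then show ?thesis unfolding K2_def by (rule card_le_floor)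
  qed
  have "\<forall>n. \<exists>e d. \<forall>x\<in>S n. e x \<in> {1..card (S n)} \<and> d (e x) = x"
    using code_exists[OF finS] by blast
  then obtain e1 where "\<forall>n. \<exists>d. \<forall>x\<in>S n. e1 n x \<in> {1..card (S n)} \<and> d (e1 n x) = x"
    by (metis choice)
  then obtain d1 where c1: "\<forall>n. \<forall>x\<in>S n. e1 n x \<in> {1..card (S n)} \<and> d1 n (e1 n x) = x"
    by (metis choice)
  have "\<forall>p. \<exists>e d. \<forall>y\<in>T (fst p) (snd p). e y \<in> {1..card (T (fst p) (snd p))} \<and> d (e y) = y"
    using code_exists[OF finT] by blast
  then obtain E2 where "\<forall>p. \<exists>d. \<forall>y\<in>T (fst p) (snd p). E2 p y \<in> {1..card (T (fst p) (snd p))} \<and> d (E2 p y) = y"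
    by (metis choice)
  then obtain D2 where c2: "\<forall>p. \<forall>y\<in>T (fst p) (snd p). E2 p y \<in> {1..card (T (fst p) (snd p))} \<and> D2 p (E2 p y) = y"
    by (metis choice)
  define dx where "dx n m = d1 n (m - 1)" for n m
  define phi1 where "phi1 n x = (if x \<in> S n then e1 n x + 1 else 1)" for n x
  define psi1 where "psi1 n m y = (if 2 \<le> m \<and> dx n m \<in> S n \<and> A1 n (zip (dx n m) y) then 1 else 2::nat)" for n m y
  define phi2 where "phi2 n m y = (if 2 \<le> m \<and> dx n m \<in> S n \<and> y \<in> T n (dx n m) then E2 (n, dx n m) y + 1 else 1)" for n m y
  define psi2 where "psi2 n m1 m2 z = (if 2 \<le> m1 \<and> dx n m1 \<in> S n \<and> 2 \<le> m2 \<and> D2 (n, dx n m1) (m2 - 1) \<in> T n (dx n m1)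
       \<and> A2 n (zip (dx n m1) (zip (D2 (n, dx n m1) (m2 - 1)) z)) then 1 else 2::nat)" for n m1 m2 z
  define N1 where "N1 n = K1 n + 1" for n
  define N2 where "N2 n = K2 n + 1" for n
  have valid: "valid_codes N1 N2 phi1 phi2 psi1 psi2"
    unfolding valid_codes_def
  proof (intro allI conjI impI)
    fix n and xs :: "'x list"
    show "phi1 n xs \<in> {1..N1 n}"
      using c1 cardS[of n] by (force simp: phi1_def N1_def)
  next
    fix n m and ys :: "'y1 list"
    assume "m \<in> {1..N1 n} \<and> length ys = n"
    show "phi2 n m ys \<in> {1..N2 n}"
    proof (cases "2 \<le> m \<and> dx n m \<in> S n \<and> ys \<in> T n (dx n m)")
      case True
      then have "length (dx n m) = n" by (simp add: S_def)
      then have "card (T n (dx n m)) \<le> K2 n" by (rule cardT)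
      then show ?thesis using True c2[rule_format, of ys "(n, dx n m)"] by (auto simp: phi2_def N2_def)
    qed (auto simp: phi2_def N2_def)
  qed (auto simp: psi1_def psi2_def)
  have dec1_eq: "dec1 phi1 psi1 n s = (if map fst s \<in> S n \<and> A1 n (map g12 s) then 1 else 2)"
    for n and s :: "('x \<times> 'y1 \<times> 'y2) list"
  proof (cases "map fst s \<in> S n")
    case True
    have "dx n (phi1 n (map fst s)) = map fst s" using True c1 by (simp add: dx_def phi1_def)
    moreover have "1 \<le> e1 n (map fst s)" using True c1 by auto
    ultimately show ?thesis using True zip_g12[of s] by (simp add: dec1_def psi1_def phi1_def xs_of_def)
  next
    case False
    then show ?thesis by (simp add: dec1_def psi1_def phi1_def xs_of_def)
  qed
  have dec2_eq: "dec2 phi1 phi2 psi2 n s = (if map fst s \<in> S n \<and> map g12 s \<in> {u. exp (- r2 n) \<le> prod_list (map W u)} \<and> A2 n s then 1 else 2)"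
    if ls: "length s = n" for n and s :: "('x \<times> 'y1 \<times> 'y2) list"
  proof -
    have Teq: "y1s_of s \<in> T n (xs_of s) \<longleftrightarrow> map g12 s \<in> {u. exp (- r2 n) \<le> prod_list (map W u)}"
      using ls zip_g12[of s] by (simp add: T_def y1s_of_def)
    show ?thesis
    proof (cases "map fst s \<in> S n")
      case True
      have dxe: "dx n (phi1 n (map fst s)) = map fst s" using True c1 by (simp add: dx_def phi1_def)
      have "1 \<le> e1 n (map fst s)" using True c1 by auto
      then have m1: "2 \<le> phi1 n (map fst s)" using True by (simp add: phi1_def)
      show ?thesis
      proof (cases "y1s_of s \<in> T n (xs_of s)")
        case True2: True
        have "D2 (n, map fst s) (E2 (n, map fst s) (y1s_of s)) = y1s_of s \<and> 1 \<le> E2 (n, map fst s) (y1s_of s)"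
          using c2[rule_format, of "y1s_of s" "(n, map fst s)"] True2 by (simp add: xs_of_def)
        then show ?thesis using True True2 Teq dxe m1 zip3[of s]
          by (simp add: dec2_def psi2_def phi2_def xs_of_def)
      next
        case False2: False
        then show ?thesis using True Teq dxe m1
          by (simp add: dec2_def psi2_def phi2_def xs_of_def)
      qed
    next
      case False
      then show ?thesis by (simp add: dec2_def psi2_def phi1_def xs_of_def)
    qed
  qed
  have LX: "(\<lambda>n. seq_prob PX n (\<lambda>u. prod_list (map PX u) < exp (- r1 n))) \<longlonglongrightarrow> 0"
    using typ_prob[OF pmfPX, of PX] unfolding r1_def \<mu>1_def by simp
  have LT: "(\<lambda>n. seq_prob Q n (\<lambda>u. prod_list (map W u) < exp (- r2 n))) \<longlonglongrightarrow> 0"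
    using typ_prob[OF pmfQ Wpos] unfolding r2_def \<mu>2_def by simp
  have LA1: "(\<lambda>n. seq_prob Q n (\<lambda>u. \<not> A1 n u)) \<longlonglongrightarrow> 0"
    using stein_ach(2)[OF pmfQ pmfQb posQb d] unfolding A1_def .
  have LA2: "(\<lambda>n. seq_prob P n (\<lambda>u. \<not> A2 n u)) \<longlonglongrightarrow> 0"
    using stein_ach(2)[OF P Pb pos d] unfolding A2_def .
  have BA1: "seq_prob Qb n (A1 n) \<le> exp (- (real n * (kl_div Q Qb - \<delta>)))" for n
    using stein_ach(1)[OF pmfQ pmfQb posQb d] unfolding A1_def .
  have BA2: "seq_prob Pbar n (A2 n) \<le> exp (- (real n * (kl_div P Pbar - \<delta>)))" for n
    using stein_ach(1)[OF P Pb pos d] unfolding A2_def .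
  have SX: "seq_prob P n (\<lambda>s. map fst s \<notin> S n) = seq_prob PX n (\<lambda>u. prod_list (map PX u) < exp (- r1 n))" for n
  proof -
    have "seq_prob P n (\<lambda>s. map fst s \<notin> S n) = seq_prob PX n (\<lambda>u. u \<notin> S n)"
      by (rule seq_prob_map[OF PXf, of n "\<lambda>u. u \<notin> S n"])
    also have "\<dots> = seq_prob PX n (\<lambda>u. prod_list (map PX u) < exp (- r1 n))"
      by (rule seq_prob_cong) (auto simp: S_def)
    finally show ?thesis .
  qed
  have al1: "seq_prob P n (\<lambda>s. dec1 phi1 psi1 n s \<noteq> 1)
     \<le> seq_prob PX n (\<lambda>u. prod_list (map PX u) < exp (- r1 n)) + seq_prob Q n (\<lambda>u. \<not> A1 n u)" for n
  proof -
    have "seq_prob P n (\<lambda>s. dec1 phi1 psi1 n s \<noteq> 1) \<le> seq_prob P n (\<lambda>s. map fst s \<notin> S n \<or> \<not> A1 n (map g12 s))"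
      by (rule seq_prob_mono_pos[OF P0]) (auto simp: dec1_eq split: if_splits)
    also have "\<dots> \<le> seq_prob P n (\<lambda>s. map fst s \<notin> S n) + seq_prob P n (\<lambda>s. \<not> A1 n (map g12 s))"
      by (rule seq_prob_union[OF P0])
    also have "seq_prob P n (\<lambda>s. \<not> A1 n (map g12 s)) = seq_prob Q n (\<lambda>u. \<not> A1 n u)"
      by (rule seq_prob_map[OF Qf, of n "\<lambda>u. \<not> A1 n u"])
    finally show ?thesis unfolding SX .
  qed
  have al2: "seq_prob P n (\<lambda>s. dec2 phi1 phi2 psi2 n s \<noteq> 1)
     \<le> seq_prob PX n (\<lambda>u. prod_list (map PX u) < exp (- r1 n)) + seq_prob Q n (\<lambda>u. prod_list (map W u) < exp (- r2 n))
        + seq_prob P n (\<lambda>u. \<not> A2 n u)" for n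
  proof -
    have "seq_prob P n (\<lambda>s. dec2 phi1 phi2 psi2 n s \<noteq> 1) \<le> seq_prob P n (\<lambda>s. (map fst s \<notin> S n \<or> prod_list (map W (map g12 s)) < exp (- r2 n)) \<or> \<not> A2 n s)"
      by (rule seq_prob_mono_pos[OF P0]) (auto simp: dec2_eq not_le split: if_splits)
    also have "\<dots> \<le> seq_prob P n (\<lambda>s. map fst s \<notin> S n \<or> prod_list (map W (map g12 s)) < exp (- r2 n)) + seq_prob P n (\<lambda>s. \<not> A2 n s)"
      by (rule seq_prob_union[OF P0])
    also have "seq_prob P n (\<lambda>s. map fst s \<notin> S n \<or> prod_list (map W (map g12 s)) < exp (- r2 n))
       \<le> seq_prob P n (\<lambda>s. map fst s \<notin> S n) + seq_prob P n (\<lambda>s. prod_list (map W (map g12 s)) < exp (- r2 n))"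
      by (rule seq_prob_union[OF P0])
    also have "seq_prob P n (\<lambda>s. prod_list (map W (map g12 s)) < exp (- r2 n)) = seq_prob Q n (\<lambda>u. prod_list (map W u) < exp (- r2 n))"
      by (rule seq_prob_map[OF Qf, of n "\<lambda>u. prod_list (map W u) < exp (- r2 n)"])
    finally show ?thesis unfolding SX by simp
  qed
  have lim1: "limsup (\<lambda>n. ereal (seq_prob P n (\<lambda>s. dec1 phi1 psi1 n s \<noteq> 1))) \<le> ereal eps1"
    by (rule limsup_le0[OF _ _ less_imp_le[OF e1]]) (use al1 tendsto_add[OF LX LA1] in auto)
  have lim2: "limsup (\<lambda>n. ereal (seq_prob P n (\<lambda>s. dec2 phi1 phi2 psi2 n s \<noteq> 1))) \<le> ereal eps2"
    by (rule limsup_le0[OF _ _ less_imp_le[OF e2]]) (use al2 tendsto_add[OF tendsto_add[OF LX LT] LA2] in auto)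
  have be1: "seq_prob Pbar n (\<lambda>s. dec1 phi1 psi1 n s \<noteq> 2) \<le> exp (- (real n * (kl_div Q Qb - \<delta>)))" for n
  proof -
    have "seq_prob Pbar n (\<lambda>s. dec1 phi1 psi1 n s \<noteq> 2) \<le> seq_prob Pbar n (\<lambda>s. A1 n (map g12 s))"
      by (rule seq_prob_mono_pos[OF Pb0]) (auto simp: dec1_eq split: if_splits)
    also have "\<dots> = seq_prob Qb n (A1 n)" by (rule seq_prob_map[OF Qbf, of n "A1 n"])
    finally show ?thesis using BA1[of n] by linarith
  qed
  have be2: "seq_prob Pbar n (\<lambda>s. dec2 phi1 phi2 psi2 n s \<noteq> 2) \<le> exp (- (real n * (kl_div P Pbar - \<delta>)))" for n
  proof -
    have "seq_prob Pbar n (\<lambda>s. dec2 phi1 phi2 psi2 n s \<noteq> 2) \<le> seq_prob Pbar n (A2 n)"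
      by (rule seq_prob_mono_pos[OF Pb0]) (auto simp: dec2_eq split: if_splits)
    then show ?thesis using BA2[of n] by linarith
  qed
  have ex1: "ereal th1 \<le> liminf (\<lambda>n. err_exp n (seq_prob Pbar n (\<lambda>s. dec1 phi1 psi1 n s \<noteq> 2)))"
  proof -
    have "ereal (max 0 (kl_div Q Qb - \<delta>)) \<le> liminf (\<lambda>n. err_exp n (seq_prob Pbar n (\<lambda>s. dec1 phi1 psi1 n s \<noteq> 2)))"
      by (rule liminf_ge, use eventually_gt_at_top[of 0] in eventually_elim)
         (intro err_exp_lower seq_prob_nonneg[OF Pb0] seq_prob_le1[OF Pb] be1, simp)
    then show ?thesis using th1(2) unfolding Q_def Qb_def by (meson order_trans ereal_less_eq(3))
  qed
  have ex2: "ereal th2 \<le> liminf (\<lambda>n. err_exp n (seq_prob Pbar n (\<lambda>s. dec2 phi1 phi2 psi2 n s \<noteq> 2)))"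
  proof -
    have "ereal (max 0 (kl_div P Pbar - \<delta>)) \<le> liminf (\<lambda>n. err_exp n (seq_prob Pbar n (\<lambda>s. dec2 phi1 phi2 psi2 n s \<noteq> 2)))"
      by (rule liminf_ge, use eventually_gt_at_top[of 0] in eventually_elim)
         (intro err_exp_lower seq_prob_nonneg[OF Pb0] seq_prob_le1[OF Pb] be2, simp)
    then show ?thesis using th2(2) by (meson order_trans ereal_less_eq(3))
  qed
  have rt1: "limsup (\<lambda>n. ereal (ln (real (N1 n)) / real n)) \<le> ereal R1"
    unfolding N1_def K1_def r1_def by (rule rate_limsup[OF mu1p]) (use R1 mu1 in simp)
  have rt2: "limsup (\<lambda>n. ereal (ln (real (N2 n)) / real n)) \<le> ereal R2"
    unfolding N2_def K2_def r2_def by (rule rate_limsup[OF mu2p]) (use R2 mu2 in simp)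
  show ?thesis unfolding achievable_def
    using th1(1) th2(1) valid lim1 lim2 ex1 ex2 rt1 rt2 by blast
qed


lemma converse:
  fixes P Pbar :: "'x::finite \<times> 'y1::finite \<times> 'y2::finite \<Rightarrow> real"
  assumes P: "is_pmf P" and Pb: "is_pmf Pbar" and pos: "\<forall>a. 0 < Pbar a"
    and e1: "eps1 < 1" and e2: "eps2 < 1"
    and ach: "achievable P Pbar R1 R2 eps1 eps2 th1 th2"
  shows "th1 \<le> kl_div (marg_XY1 P) (marg_XY1 Pbar) \<and> th2 \<le> kl_div P Pbar"
proof -
  define Q where "Q = marg_XY1 P"
  define Qb where "Qb = marg_XY1 Pbar"
  have Qf: "\<forall>b. Q b = (\<Sum>a\<in>{a. g12 a = b}. P a)" unfolding Q_def using marg12_fiber by blast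
  have Qbf: "\<forall>b. Qb b = (\<Sum>a\<in>{a. g12 a = b}. Pbar a)" unfolding Qb_def using marg12_fiber by blast
  have pmfQ: "is_pmf Q" by (rule pmf_push[OF P Qf])
  have pmfQb: "is_pmf Qb" by (rule pmf_push[OF Pb Qbf])
  have posQb: "\<forall>b. 0 < Qb b"
  proof
    fix b :: "'x \<times> 'y1"
    show "0 < Qb b" unfolding Qb_def marg_XY1_def using pos by (cases b) (auto intro!: sum_pos)
  qed
  obtain N1 N2 phi1 phi2 psi1 psi2 where
    valid: "valid_codes N1 N2 phi1 phi2 psi1 psi2"
    and a1: "limsup (\<lambda>n. ereal (seq_prob P n (\<lambda>s. dec1 phi1 psi1 n s \<noteq> 1))) \<le> ereal eps1"
    and a2: "limsup (\<lambda>n. ereal (seq_prob P n (\<lambda>s. dec2 phi1 phi2 psi2 n s \<noteq> 1))) \<le> ereal eps2"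
    and b1: "ereal th1 \<le> liminf (\<lambda>n. err_exp n (seq_prob Pbar n (\<lambda>s. dec1 phi1 psi1 n s \<noteq> 2)))"
    and b2: "ereal th2 \<le> liminf (\<lambda>n. err_exp n (seq_prob Pbar n (\<lambda>s. dec2 phi1 phi2 psi2 n s \<noteq> 2)))"
    using ach unfolding achievable_def by blast
  have v1: "\<And>n xs. length xs = n \<Longrightarrow> phi1 n xs \<in> {1..N1 n}"
    and v2: "\<And>n m ys. m \<in> {1..N1 n} \<Longrightarrow> length ys = n \<Longrightarrow> phi2 n m ys \<in> {1..N2 n}"
    and v3: "\<And>n m ys. m \<in> {1..N1 n} \<Longrightarrow> length ys = n \<Longrightarrow> psi1 n m ys \<in> {1, 2}"
    and v4: "\<And>n m1 m2 zs. m1 \<in> {1..N1 n} \<Longrightarrow> m2 \<in> {1..N2 n} \<Longrightarrow> length zs = n \<Longrightarrow> psi2 n m1 m2 zs \<in> {1, 2}"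
    using valid unfolding valid_codes_def by blast+
  have d1range: "\<And>n s. length s = n \<Longrightarrow> dec1 phi1 psi1 n s \<in> {1, 2}"
    unfolding dec1_def by (intro v3 v1) (auto simp: xs_of_def y1s_of_def)
  have d2range: "\<And>n s. length s = n \<Longrightarrow> dec2 phi1 phi2 psi2 n s \<in> {1, 2}"
    unfolding dec2_def by (intro v4 v2 v1) (auto simp: xs_of_def y1s_of_def y2s_of_def)
  define E where "E n u = (psi1 n (phi1 n (map fst u)) (map snd u) = 1)" for n u
  have dE: "dec1 phi1 psi1 n s = 1 \<longleftrightarrow> E n (map g12 s)" for n s
    unfolding E_def dec1_def xs_of_def y1s_of_def by (simp add: g12_def comp_def)
  have "th1 \<le> kl_div Q Qb"
  proof -
    define c where "c = (1 - eps1) / 2"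
    have c: "0 < c" using e1 by (simp add: c_def)
    have "limsup (\<lambda>n. ereal (seq_prob P n (\<lambda>s. dec1 phi1 psi1 n s \<noteq> 1))) < ereal (1 - c)"
      by (rule le_less_trans[OF a1]) (use e1 in \<open>simp add: c_def field_simps\<close>)
    then have ev0: "\<forall>\<^sub>F n in sequentially. ereal (seq_prob P n (\<lambda>s. dec1 phi1 psi1 n s \<noteq> 1)) < ereal (1 - c)"
      by (rule Limsup_lessD)
    have ev: "\<forall>\<^sub>F n in sequentially. c \<le> seq_prob Q n (E n)"
      using ev0
    proof eventually_elim
      case (elim n)
      have "seq_prob Q n (E n) = seq_prob P n (\<lambda>s. E n (map g12 s))"
        by (rule seq_prob_map[OF Qf, symmetric])
      also have "\<dots> = seq_prob P n (\<lambda>s. \<not> (dec1 phi1 psi1 n s \<noteq> 1))" by (rule seq_prob_cong) (use dE in auto)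
      also have "\<dots> = 1 - seq_prob P n (\<lambda>s. dec1 phi1 psi1 n s \<noteq> 1)" by (rule seq_prob_compl[OF P])
      finally show ?case using elim by simp
    qed
    have L: "liminf (\<lambda>n. err_exp n (seq_prob Qb n (E n))) \<le> ereal (kl_div Q Qb)"
      by (rule stein_conv[OF pmfQ pmfQb posQb c ev])
    have eqf: "seq_prob Qb n (E n) = seq_prob Pbar n (\<lambda>s. dec1 phi1 psi1 n s \<noteq> 2)" for n
    proof -
      have "seq_prob Qb n (E n) = seq_prob Pbar n (\<lambda>s. E n (map g12 s))"
        by (rule seq_prob_map[OF Qbf, symmetric])
      also have "\<dots> = seq_prob Pbar n (\<lambda>s. dec1 phi1 psi1 n s \<noteq> 2)"
      proof (rule seq_prob_cong)
        fix s :: "('x \<times> 'y1 \<times> 'y2) list" assume "length s = n"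
        then show "E n (map g12 s) = (dec1 phi1 psi1 n s \<noteq> 2)" using dE[of n s] d1range[OF \<open>length s = n\<close>] by auto
      qed
      finally show ?thesis .
    qed
    have "liminf (\<lambda>n. err_exp n (seq_prob Pbar n (\<lambda>s. dec1 phi1 psi1 n s \<noteq> 2))) \<le> ereal (kl_div Q Qb)"
      using L by (simp only: eqf)
    then have "ereal th1 \<le> ereal (kl_div Q Qb)" by (rule order_trans[OF b1])
    then show ?thesis by simp
  qed
  moreover have "th2 \<le> kl_div P Pbar"
  proof -
    define c where "c = (1 - eps2) / 2"
    have c: "0 < c" using e2 by (simp add: c_def)
    have "limsup (\<lambda>n. ereal (seq_prob P n (\<lambda>s. dec2 phi1 phi2 psi2 n s \<noteq> 1))) < ereal (1 - c)"
      by (rule le_less_trans[OF a2]) (use e2 in \<open>simp add: c_def field_simps\<close>)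
    then have ev0: "\<forall>\<^sub>F n in sequentially. ereal (seq_prob P n (\<lambda>s. dec2 phi1 phi2 psi2 n s \<noteq> 1)) < ereal (1 - c)"
      by (rule Limsup_lessD)
    have ev: "\<forall>\<^sub>F n in sequentially. c \<le> seq_prob P n (\<lambda>s. dec2 phi1 phi2 psi2 n s = 1)"
      using ev0
    proof eventually_elim
      case (elim n)
      have "seq_prob P n (\<lambda>s. dec2 phi1 phi2 psi2 n s = 1) = seq_prob P n (\<lambda>s. \<not> (dec2 phi1 phi2 psi2 n s \<noteq> 1))" by simp
      also have "\<dots> = 1 - seq_prob P n (\<lambda>s. dec2 phi1 phi2 psi2 n s \<noteq> 1)" by (rule seq_prob_compl[OF P])
      finally show ?case using elim by simp
    qed
    have L: "liminf (\<lambda>n. err_exp n (seq_prob Pbar n (\<lambda>s. dec2 phi1 phi2 psi2 n s = 1))) \<le> ereal (kl_div P Pbar)"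
      by (rule stein_conv[OF P Pb pos c ev])
    have eqf: "seq_prob Pbar n (\<lambda>s. dec2 phi1 phi2 psi2 n s = 1) = seq_prob Pbar n (\<lambda>s. dec2 phi1 phi2 psi2 n s \<noteq> 2)" for n
    proof (rule seq_prob_cong)
      fix s :: "('x \<times> 'y1 \<times> 'y2) list" assume "length s = n"
      then show "(dec2 phi1 phi2 psi2 n s = 1) = (dec2 phi1 phi2 psi2 n s \<noteq> 2)" using d2range[OF \<open>length s = n\<close>] by auto
    qed
    have "liminf (\<lambda>n. err_exp n (seq_prob Pbar n (\<lambda>s. dec2 phi1 phi2 psi2 n s \<noteq> 2))) \<le> ereal (kl_div P Pbar)"
      using L by (simp only: eqf)
    then have "ereal th2 \<le> ereal (kl_div P Pbar)" by (rule order_trans[OF b2])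
    then show ?thesis by simp
  qed
  ultimately show ?thesis unfolding Q_def Qb_def by simp
qed

theorem proposition1:
  fixes P Pbar :: "'x::finite \<times> 'y1::finite \<times> 'y2::finite \<Rightarrow> real"
    and R1 R2 eps1 eps2 :: real
  assumes "is_pmf P" and "is_pmf Pbar"
    and "\<forall>a. 0 < Pbar a"
    and "R1 \<ge> entropy_pmf (marg_X P)"
    and "R2 \<ge> cond_entropy_Y1_X P"
    and "0 < eps1" "eps1 < 1" "0 < eps2" "eps2 < 1"
  shows "exponent_region P Pbar R1 R2 eps1 eps2 =
           {(th1, th2). 0 \<le> th1 \<and> 0 \<le> th2
              \<and> th1 \<le> kl_div (marg_XY1 P) (marg_XY1 Pbar)
              \<and> th2 \<le> kl_div P Pbar}"
proof -
  define D1 where "D1 = kl_div (marg_XY1 P) (marg_XY1 Pbar)"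
  define D2 where "D2 = kl_div P Pbar"
  define Ach where "Ach = {(th1, th2). achievable P Pbar R1 R2 eps1 eps2 th1 th2}"
  have R: "{(th1, th2). 0 \<le> th1 \<and> 0 \<le> th2 \<and> th1 \<le> D1 \<and> th2 \<le> D2} = {0..D1} \<times> {0..D2}"
    by auto
  have sub: "Ach \<subseteq> {0..D1} \<times> {0..D2}"
  proof
    fix p assume "p \<in> Ach"
    then obtain a b where p: "p = (a, b)" and ach: "achievable P Pbar R1 R2 eps1 eps2 a b"
      unfolding Ach_def by auto
    have "0 \<le> a" using ach[unfolded achievable_def] by (rule conjunct1)
    moreover have "0 \<le> b" using ach[unfolded achievable_def] by (rule conjunct1[OF conjunct2])
    moreover have "a \<le> D1 \<and> b \<le> D2" unfolding D1_def D2_def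
      by (rule converse[OF assms(1,2,3,7,9) ach])
    ultimately show "p \<in> {0..D1} \<times> {0..D2}" using p by auto
  qed
  have "closure Ach \<subseteq> {0..D1} \<times> {0..D2}"
    by (rule closure_minimal[OF sub]) (intro closed_Times closed_atLeastAtMost)
  moreover have "{0..D1} \<times> {0..D2} \<subseteq> closure Ach"
  proof
    fix p assume "p \<in> {0..D1} \<times> {0..D2}"
    then obtain a b where p: "p = (a, b)" and ab: "0 \<le> a" "a \<le> D1" "0 \<le> b" "b \<le> D2" by auto
    show "p \<in> closure Ach" unfolding closure_approachable
    proof (intro allI impI)
      fix e :: real assume e: "0 < e"
      define \<delta> where "\<delta> = e / 3"
      have d: "0 < \<delta>" using e by (simp add: \<delta>_def)
      have "achievable P Pbar R1 R2 eps1 eps2 (max 0 (a - \<delta>)) (max 0 (b - \<delta>))"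
        by (rule achievability[OF assms(1-6) assms(8) d]) (use ab in \<open>auto simp: D1_def D2_def\<close>)
      then have "(max 0 (a - \<delta>), max 0 (b - \<delta>)) \<in> Ach" unfolding Ach_def by simp
      moreover have "dist (max 0 (a - \<delta>), max 0 (b - \<delta>)) p < e"
      proof -
        have "dist (max 0 (a - \<delta>), max 0 (b - \<delta>)) p
            = sqrt ((max 0 (a - \<delta>) - a)\<^sup>2 + (max 0 (b - \<delta>) - b)\<^sup>2)"
          unfolding p dist_Pair_Pair by (simp add: dist_real_def)
        also have "\<dots> \<le> \<bar>max 0 (a - \<delta>) - a\<bar> + \<bar>max 0 (b - \<delta>) - b\<bar>"
          by (rule sqrt_sum_squares_le_sum_abs)
        also have "\<dots> \<le> \<delta> + \<delta>" using ab d by (intro add_mono) (auto simp: max_def)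
        also have "\<dots> < e" using e by (simp add: \<delta>_def)
        finally show ?thesis .
      qed
      ultimately show "\<exists>y\<in>Ach. dist y p < e" by blast
    qed
  qed
  ultimately have "closure Ach = {0..D1} \<times> {0..D2}" by blast
  then show ?thesis unfolding exponent_region_def Ach_def[symmetric] D1_def[symmetric] D2_def[symmetric] R .
qed

end
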